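(* Let $d$ be a positive integer and let $n,m$ be such that $T_{n,m}$ is nonempty. Then the set of all $d$-locally most reliable two-terminal graphs near $1$ in $T_{n,m}$ is nonempty and equals $T_{n,m}^d(m)$.
   Context: All graphs are finite, simple and undirected. A two-terminal graph is a graph $G$ together with two distinguished vertices $s,t$ (the terminals). Two two-terminal graphs are isomorphic if there is a graph isomorphism between them mapping the set of terminals onto the set of terminals. $T_{n,m}$ denotes the set of all pairwise nonisomorphic two-terminal graphs with $n$ vertices and $m$ edges. For a positive integer $d$, a $d$-pathset of a two-terminal graph $G$ is a spanning subgraph of $G$ containing a path of length (number of edges) at most $d$ joining $s$ and $t$; $N_i^d(G)$ is the number of $d$-pathsets of $G$ with exactly $i$ edges. For $\rho\in[0,1]$, $R_G^d(\rho)$ is the probability that the random spanning subgraph obtained from $G$ by deleting each edge independently with probability $\rho$ is a $d$-pathset; equivalently $R_G^d(\rho)=\sum_{i=1}^m N_i^d(G)(1-\rho)^i\rho^{m-i}$. $G\in T_{n,m}$ is a $d$-locally most reliable two-terminal graph near $1$ if there exists $\delta>0$ such that $R_G^d(\rho)\geq R_H^d(\rho)$ for every $H\in T_{n,m}$ and every $\rho\in(1-\delta,1)$. Define $T_{n,m}^d(0)=T_{n,m}$ and, for $i\in\{0,1,\ldots,m-1\}$, $T_{n,m}^d(i+1)=\{G\in T_{n,m}^d(i): N_{i+1}^d(G)\geq N_{i+1}^d(H)\text{ for all }H\in T_{n,m}^d(i)\}$. *)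

theory Defs
  imports Complex_Main
begin

type_synonym 'a ttg = "'a set \<times> 'a set set \<times> 'a \<times> 'a"

definition verts :: "'a ttg \<Rightarrow> 'a set" where "verts G = fst G"
definition edges :: "'a ttg \<Rightarrow> 'a set set" where "edges G = fst (snd G)"
definition src :: "'a ttg \<Rightarrow> 'a" where "src G = fst (snd (snd G))"
definition tgt :: "'a ttg \<Rightarrow> 'a" where "tgt G = snd (snd (snd G))"

definition is_ttg :: "'a ttg \<Rightarrow> bool" where
  "is_ttg G \<longleftrightarrow> finite (verts G)
     \<and> (\<forall>e\<in>edges G. \<exists>u v. u \<in> verts G \<and> v \<in> verts G \<and> u \<noteq> v \<and> e = {u, v})
     \<and> src G \<in> verts G \<and> tgt G \<in> verts G \<and> src G \<noteq> tgt G"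

definition ttg_iso :: "'a ttg \<Rightarrow> 'b ttg \<Rightarrow> bool" where
  "ttg_iso G H \<longleftrightarrow> (\<exists>f. bij_betw f (verts G) (verts H)
     \<and> (\<forall>u\<in>verts G. \<forall>v\<in>verts G. {u, v} \<in> edges G \<longleftrightarrow> {f u, f v} \<in> edges H)
     \<and> f ` {src G, tgt G} = {src H, tgt H})"

definition ttg_nm :: "nat \<Rightarrow> nat \<Rightarrow> 'a ttg \<Rightarrow> bool" where
  "ttg_nm n m G \<longleftrightarrow> is_ttg G \<and> card (verts G) = n \<and> card (edges G) = m"

definition is_T :: "nat \<Rightarrow> nat \<Rightarrow> 'a ttg set \<Rightarrow> bool" where
  "is_T n m T \<longleftrightarrow> (\<forall>G\<in>T. ttg_nm n m G)
     \<and> (\<forall>G\<in>T. \<forall>H\<in>T. ttg_iso G H \<longrightarrow> G = H)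
     \<and> (\<forall>G::'a ttg. ttg_nm n m G \<longrightarrow> (\<exists>H\<in>T. ttg_iso G H))"

text \<open>F (a set of edges of G, i.e. a spanning subgraph) contains a path of length
  (number of edges) at most d joining s and t.\<close>
definition is_path :: "'a set set \<Rightarrow> 'a list \<Rightarrow> 'a \<Rightarrow> 'a \<Rightarrow> bool" where
  "is_path F p u v \<longleftrightarrow> p \<noteq> [] \<and> hd p = u \<and> last p = v \<and> distinct p
     \<and> (\<forall>i. Suc i < length p \<longrightarrow> {p ! i, p ! Suc i} \<in> F)"

definition is_pathset :: "nat \<Rightarrow> 'a ttg \<Rightarrow> 'a set set \<Rightarrow> bool" where
  "is_pathset d G F \<longleftrightarrow> F \<subseteq> edges G
     \<and> (\<exists>p. is_path F p (src G) (tgt G) \<and> length p - 1 \<le> d)"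

definition Npath :: "nat \<Rightarrow> nat \<Rightarrow> 'a ttg \<Rightarrow> nat" where
  "Npath d i G = card {F. is_pathset d G F \<and> card F = i}"

definition Rel :: "nat \<Rightarrow> 'a ttg \<Rightarrow> real \<Rightarrow> real" where
  "Rel d G \<rho> = (\<Sum>i=1..card (edges G). real (Npath d i G) * (1 - \<rho>) ^ i * \<rho> ^ (card (edges G) - i))"

definition locally_most_reliable :: "nat \<Rightarrow> 'a ttg set \<Rightarrow> 'a ttg \<Rightarrow> bool" where
  "locally_most_reliable d T G \<longleftrightarrow> G \<in> T \<and>
     (\<exists>\<delta>>0. \<forall>H\<in>T. \<forall>\<rho>. 1 - \<delta> < \<rho> \<and> \<rho> < 1 \<longrightarrow> Rel d G \<rho> \<ge> Rel d H \<rho>)"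

fun Tseq :: "nat \<Rightarrow> 'a ttg set \<Rightarrow> nat \<Rightarrow> 'a ttg set" where
  "Tseq d T 0 = T"
| "Tseq d T (Suc i) = {G \<in> Tseq d T i. \<forall>H\<in>Tseq d T i. Npath d (Suc i) H \<le> Npath d (Suc i) G}"

end

theory Submission imports Defs begin

lemma core:
  fixes c :: "nat \<Rightarrow> real"
  assumes k1: "1 \<le> k" and km: "k \<le> m" and z: "\<forall>i\<in>{1..<k}. c i = 0" and ck: "c k > 0"
  shows "eventually (\<lambda>\<rho>. (\<Sum>i=1..m. c i * (1-\<rho>)^i * \<rho>^(m-i)) > 0) (at_left 1)"
proof -
  define g where "g \<rho> = (\<Sum>i=k..m. c i * (1-\<rho>)^(i-k) * \<rho>^(m-i))" for \<rho> :: real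
  have split: "(\<Sum>i=1..m. c i * (1-\<rho>)^i * \<rho>^(m-i)) = (1-\<rho>)^k * g \<rho>" for \<rho> :: real
  proof -
    have "{1..m} = {1..<k} \<union> {k..m}" using k1 km by auto
    then have "(\<Sum>i=1..m. c i * (1-\<rho>)^i * \<rho>^(m-i)) = (\<Sum>i\<in>{1..<k}. c i * (1-\<rho>)^i * \<rho>^(m-i)) + (\<Sum>i=k..m. c i * (1-\<rho>)^i * \<rho>^(m-i))"
      by (simp add: sum.union_disjoint ivl_disj_int)
    also have "(\<Sum>i\<in>{1..<k}. c i * (1-\<rho>)^i * \<rho>^(m-i)) = 0" using z by simp
    also have "(\<Sum>i=k..m. c i * (1-\<rho>)^i * \<rho>^(m-i)) = (\<Sum>i=k..m. (1-\<rho>)^k * (c i * (1-\<rho>)^(i-k) * \<rho>^(m-i)))"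
    proof (rule sum.cong)
      fix i assume "i \<in> {k..m}"
      then have "(1-\<rho>)^i = (1-\<rho>)^k * (1-\<rho>)^(i-k)" by (simp add: power_add[symmetric])
      then show "c i * (1-\<rho>)^i * \<rho>^(m-i) = (1-\<rho>)^k * (c i * (1-\<rho>)^(i-k) * \<rho>^(m-i))" by simp
    qed simp
    finally show ?thesis by (simp add: g_def sum_distrib_left)
  qed
  have g1: "g 1 = c k"
  proof -
    have "g 1 = c k * (1-1)^(k-k) * 1^(m-k) + (\<Sum>i\<in>{k..m}-{k}. c i * (1-1)^(i-k) * 1^(m-i))"
      unfolding g_def using km by (subst sum.remove[of _ k]) auto
    also have "(\<Sum>i\<in>{k..m}-{k}. c i * (1-(1::real))^(i-k) * 1^(m-i)) = 0"
      by (rule sum.neutral) auto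
    finally show ?thesis by simp
  qed
  have "isCont g 1" unfolding g_def by (intro continuous_intros)
  then have "(g \<longlongrightarrow> g 1) (at 1)" by (simp add: isCont_def)
  then have "(g \<longlongrightarrow> c k) (at_left 1)" using g1 by (metis tendsto_mono at_le subset_UNIV)
  then have "eventually (\<lambda>\<rho>. g \<rho> > 0) (at_left 1)" using ck by (rule order_tendstoD(1))
  moreover have "eventually (\<lambda>\<rho>. \<rho> < (1::real)) (at_left 1)"
    by (simp add: eventually_at_filter)
  ultimately show ?thesis
  proof eventually_elim
    case (elim \<rho>)
    then show ?case unfolding split by simp
  qed
qed


definition lexge :: "nat \<Rightarrow> (nat \<Rightarrow> nat) \<Rightarrow> (nat \<Rightarrow> nat) \<Rightarrow> bool" where
  "lexge k a b \<longleftrightarrow> (\<forall>i\<in>{1..k}. a i = b i) \<or> (\<exists>j\<in>{1..k}. (\<forall>i\<in>{1..<j}. a i = b i) \<and> b j < a j)"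

lemma lex_total:
  assumes "\<not> lexge k a b"
  shows "\<exists>j\<in>{1..k}. (\<forall>i\<in>{1..<j}. a i = b i) \<and> a j < b j"
proof -
  from assms obtain i where i: "i \<in> {1..k}" "a i \<noteq> b i" unfolding lexge_def by auto
  define j where "j = (LEAST j. j \<in> {1..k} \<and> a j \<noteq> b j)"
  have j: "j \<in> {1..k} \<and> a j \<noteq> b j" unfolding j_def by (rule LeastI[of _ i]) (use i in auto)
  have pre: "\<forall>i\<in>{1..<j}. a i = b i"
  proof
    fix i assume "i \<in> {1..<j}"
    then show "a i = b i" using j not_less_Least[of i "\<lambda>j. j \<in> {1..k} \<and> a j \<noteq> b j"]
      unfolding j_def[symmetric] by auto
  qed
  have "\<not> b j < a j" using assms j pre unfolding lexge_def by blast
  then show ?thesis using j pre by (intro bexI[of _ j]) auto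
qed

lemma lex_antisym:
  assumes "lexge k a b" "lexge k b a"
  shows "\<forall>i\<in>{1..k}. a i = b i"
proof (rule ccontr)
  assume ne: "\<not> ?thesis"
  then obtain j1 where j1: "j1 \<in> {1..k}" "\<forall>i\<in>{1..<j1}. a i = b i" "b j1 < a j1"
    using assms(1) unfolding lexge_def by blast
  from ne obtain j2 where j2: "j2 \<in> {1..k}" "\<forall>i\<in>{1..<j2}. b i = a i" "a j2 < b j2"
    using assms(2) unfolding lexge_def by (metis)
  show False
  proof (cases j1 j2 rule: linorder_cases)
    case less then show ?thesis using j1 j2 by (metis atLeastLessThan_iff atLeastAtMost_iff less_irrefl)
  next
    case equal then show ?thesis using j1 j2 by simp
  next
    case greater then show ?thesis using j1 j2 by (metis atLeastLessThan_iff atLeastAtMost_iff less_irrefl)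
  qed
qed

lemma lex_cong:
  assumes "\<forall>i\<in>{1..k}. a i = a' i"
  shows "lexge k a b = lexge k a' b"
  unfolding lexge_def using assms by (smt (verit) atLeastAtMost_iff atLeastLessThan_iff less_imp_le order_trans)

lemma lex_Suc:
  "lexge (Suc k) a b \<longleftrightarrow> (\<exists>j\<in>{1..k}. (\<forall>i\<in>{1..<j}. a i = b i) \<and> b j < a j)
     \<or> ((\<forall>i\<in>{1..k}. a i = b i) \<and> b (Suc k) \<le> a (Suc k))"
proof -
  have U: "{1..Suc k} = insert (Suc k) {1..k}" by auto
  show ?thesis unfolding lexge_def U
    by (auto simp: le_less atLeastLessThanSuc_atLeastAtMost[symmetric])
qed


lemma lex_Suc_down: "lexge (Suc k) a b \<Longrightarrow> lexge k a b"
  unfolding lex_Suc by (auto simp: lexge_def)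

lemma lex_Suc_strict: "lexge k a b \<Longrightarrow> \<not> (\<forall>i\<in>{1..k}. a i = b i) \<Longrightarrow> lexge (Suc k) a b"
  unfolding lex_Suc by (auto simp: lexge_def)

lemma Tseq_char:
  "Tseq d T k = {G\<in>T. \<forall>H\<in>T. lexge k (\<lambda>i. Npath d i G) (\<lambda>i. Npath d i H)}"
proof (induction k)
  case 0
  then show ?case by (simp add: lexge_def)
next
  case (Suc k)
  let ?N = "\<lambda>G i. Npath d i G"
  show ?case
  proof (intro set_eqI iffI)
    fix G assume "G \<in> Tseq d T (Suc k)"
    then have G: "G \<in> T" "\<forall>H\<in>T. lexge k (?N G) (?N H)"
      and mx: "\<forall>H\<in>Tseq d T k. Npath d (Suc k) H \<le> Npath d (Suc k) G"
      using Suc by auto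
    have "lexge (Suc k) (?N G) (?N H)" if H: "H \<in> T" for H
    proof (cases "\<forall>i\<in>{1..k}. ?N G i = ?N H i")
      case True
      have "\<forall>H'\<in>T. lexge k (?N H) (?N H')"
        using G(2) lex_cong[OF True] by blast
      then have "H \<in> Tseq d T k" using Suc H by simp
      then show ?thesis using mx True unfolding lex_Suc by auto
    next
      case False
      then show ?thesis using G(2) H lex_Suc_strict by blast
    qed
    then show "G \<in> {G\<in>T. \<forall>H\<in>T. lexge (Suc k) (?N G) (?N H)}" using G by auto
  next
    fix G assume "G \<in> {G\<in>T. \<forall>H\<in>T. lexge (Suc k) (?N G) (?N H)}"
    then have G: "G \<in> T" "\<forall>H\<in>T. lexge (Suc k) (?N G) (?N H)" by auto
    have Gk: "\<forall>H\<in>T. lexge k (?N G) (?N H)"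
      using G(2) lex_Suc_down by blast
    have "Npath d (Suc k) H \<le> Npath d (Suc k) G" if H: "H \<in> Tseq d T k" for H
    proof -
      have "H \<in> T" "lexge k (?N H) (?N G)" using H Suc G by auto
      then have eq: "\<forall>i\<in>{1..k}. ?N G i = ?N H i" using lex_antisym Gk by metis
      have "lexge (Suc k) (?N G) (?N H)" using G \<open>H \<in> T\<close> by blast
      then have "(\<exists>j\<in>{1..k}. (\<forall>i\<in>{1..<j}. ?N G i = ?N H i) \<and> ?N H j < ?N G j)
     \<or> ((\<forall>i\<in>{1..k}. ?N G i = ?N H i) \<and> ?N H (Suc k) \<le> ?N G (Suc k))" by (simp only: lex_Suc)
      moreover have "\<not> (\<exists>j\<in>{1..k}. (\<forall>i\<in>{1..<j}. ?N G i = ?N H i) \<and> ?N H j < ?N G j)"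
        using eq by auto
      ultimately show ?thesis by blast
    qed
    then show "G \<in> Tseq d T (Suc k)" using Suc G Gk by auto
  qed
qed


lemma edges_finite: "is_ttg G \<Longrightarrow> finite (edges G)"
proof -
  assume g: "is_ttg G"
  then have "edges G \<subseteq> Pow (verts G)" unfolding is_ttg_def by fastforce
  moreover have "finite (verts G)" using g unfolding is_ttg_def by blast
  ultimately show ?thesis by (meson finite_Pow_iff finite_subset)
qed

lemma Npath_bound: "is_ttg G \<Longrightarrow> Npath d i G \<le> 2 ^ card (edges G)"
proof -
  assume g: "is_ttg G"
  have "{F. is_pathset d G F \<and> card F = i} \<subseteq> Pow (edges G)" unfolding is_pathset_def by auto
  then have "Npath d i G \<le> card (Pow (edges G))" unfolding Npath_def
    using edges_finite[OF g] by (intro card_mono) auto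
  then show ?thesis using edges_finite[OF g] by (simp add: card_Pow)
qed

definition Pf :: "nat \<Rightarrow> (nat \<Rightarrow> real) \<Rightarrow> real \<Rightarrow> real" where
  "Pf m c \<rho> = (\<Sum>i=1..m. c i * (1-\<rho>)^i * \<rho>^(m-i))"

lemma Rel_Pf: "ttg_nm n m G \<Longrightarrow> Rel d G = Pf m (\<lambda>i. real (Npath d i G))"
  unfolding Rel_def Pf_def ttg_nm_def by (auto simp: fun_eq_iff)

lemma Pf_diff: "Pf m a \<rho> - Pf m b \<rho> = Pf m (\<lambda>i. a i - b i) \<rho>"
  unfolding Pf_def by (simp add: sum_subtractf[symmetric] left_diff_distrib)

lemma lex_eventually:
  assumes "lexge m a b"
  shows "eventually (\<lambda>\<rho>. Pf m (\<lambda>i. real (b i)) \<rho> \<le> Pf m (\<lambda>i. real (a i)) \<rho>) (at_left 1)"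
proof (cases "\<forall>i\<in>{1..m}. a i = b i")
  case True
  then have "Pf m (\<lambda>i. real (b i)) \<rho> = Pf m (\<lambda>i. real (a i)) \<rho>" for \<rho>
    unfolding Pf_def by (intro sum.cong) auto
  then show ?thesis by simp
next
  case False
  have "\<exists>j\<in>{1..m}. (\<forall>i\<in>{1..<j}. a i = b i) \<and> b j < a j"
    using assms False unfolding lexge_def by (elim disjE) simp_all
  then obtain j where j: "j \<in> {1..m}" "\<forall>i\<in>{1..<j}. a i = b i" "b j < a j"
    by blast
  have "eventually (\<lambda>\<rho>. Pf m (\<lambda>i. real (a i) - real (b i)) \<rho> > 0) (at_left 1)"
    unfolding Pf_def using j by (intro core[of j m]) auto
  then show ?thesis
  proof eventually_elim
    case (elim \<rho>)
    then show ?case using Pf_diff[of m "\<lambda>i. real (a i)" \<rho> "\<lambda>i. real (b i)"] by simp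
  qed
qed

lemma nlex_eventually:
  assumes "\<not> lexge m a b"
  shows "eventually (\<lambda>\<rho>. Pf m (\<lambda>i. real (a i)) \<rho> < Pf m (\<lambda>i. real (b i)) \<rho>) (at_left 1)"
proof -
  obtain j where j: "j \<in> {1..m}" "\<forall>i\<in>{1..<j}. a i = b i" "a j < b j"
    using lex_total[OF assms] by blast
  have "eventually (\<lambda>\<rho>. Pf m (\<lambda>i. real (b i) - real (a i)) \<rho> > 0) (at_left 1)"
    unfolding Pf_def using j by (intro core[of j m]) auto
  then show ?thesis
  proof eventually_elim
    case (elim \<rho>)
    then show ?case using Pf_diff[of m "\<lambda>i. real (b i)" \<rho> "\<lambda>i. real (a i)"] by simp
  qed
qed

lemma lmr_eventually:
  "locally_most_reliable d T G \<longleftrightarrow> G \<in> T \<and> eventually (\<lambda>\<rho>. \<forall>H\<in>T. Rel d G \<rho> \<ge> Rel d H \<rho>) (at_left 1)"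
  unfolding locally_most_reliable_def eventually_at_left_field
proof (intro conj_cong refl iffI)
  assume "\<exists>\<delta>>0. \<forall>H\<in>T. \<forall>\<rho>. 1 - \<delta> < \<rho> \<and> \<rho> < 1 \<longrightarrow> Rel d H \<rho> \<le> Rel d G \<rho>"
  then obtain \<delta> where "\<delta> > 0" "\<forall>H\<in>T. \<forall>\<rho>. 1 - \<delta> < \<rho> \<and> \<rho> < 1 \<longrightarrow> Rel d H \<rho> \<le> Rel d G \<rho>" by blast
  then show "\<exists>b<1. \<forall>y>b. y < 1 \<longrightarrow> (\<forall>H\<in>T. Rel d H y \<le> Rel d G y)"
    by (intro exI[of _ "1 - \<delta>"]) auto
next
  assume "\<exists>b<1. \<forall>y>b. y < 1 \<longrightarrow> (\<forall>H\<in>T. Rel d H y \<le> Rel d G y)"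
  then obtain b where "b < 1" "\<forall>y>b. y < 1 \<longrightarrow> (\<forall>H\<in>T. Rel d H y \<le> Rel d G y)" by blast
  then show "\<exists>\<delta>>0. \<forall>H\<in>T. \<forall>\<rho>. 1 - \<delta> < \<rho> \<and> \<rho> < 1 \<longrightarrow> Rel d H \<rho> \<le> Rel d G \<rho>"
    by (intro exI[of _ "1 - b"]) auto
qed


lemma Tseq_sub: "Tseq d T k \<subseteq> T"
  by (induction k) auto

lemma Tseq_ne:
  assumes T: "is_T n m T" and ne: "T \<noteq> {}"
  shows "Tseq d T k \<noteq> {}"
proof (induction k)
  case 0 then show ?case using ne by simp
next
  case (Suc k)
  let ?S = "Tseq d T k"
  let ?V = "(\<lambda>H. Npath d (Suc k) H) ` ?S"
  have bd: "?V \<subseteq> {..2^m}"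
  proof
    fix x assume "x \<in> ?V"
    then obtain H where H: "H \<in> ?S" "x = Npath d (Suc k) H" by blast
    then have "ttg_nm n m H" using T Tseq_sub unfolding is_T_def by blast
    then show "x \<in> {..2^m}" using Npath_bound[of H d "Suc k"] H unfolding ttg_nm_def by auto
  qed
  have fin: "finite ?V" using bd finite_subset by blast
  have "?V \<noteq> {}" using Suc by simp
  then have "Max ?V \<in> ?V" using fin by simp
  then obtain G where G: "G \<in> ?S" "Npath d (Suc k) G = Max ?V" by auto
  have "\<forall>H\<in>?S. Npath d (Suc k) H \<le> Npath d (Suc k) G"
    using G fin by simp
  then have "G \<in> Tseq d T (Suc k)" using G by simp
  then show ?case by blast
qed

lemma Rel_finite:
  assumes T: "is_T n m T"
  shows "finite (Rel d ` T)"
proof -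
  let ?L = "{l. set l \<subseteq> {..(2::nat)^m} \<and> length l = m}"
  have "Rel d ` T \<subseteq> (\<lambda>l. Pf m (\<lambda>i. real (l ! (i-1)))) ` ?L"
  proof
    fix f assume "f \<in> Rel d ` T"
    then obtain H where H: "H \<in> T" "f = Rel d H" by blast
    have nm: "ttg_nm n m H" using T H unfolding is_T_def by blast
    define l where "l = map (\<lambda>i. Npath d i H) [1..<m+1]"
    have "l \<in> ?L" unfolding l_def using Npath_bound[of H d] nm unfolding ttg_nm_def by auto
    moreover have "f = Pf m (\<lambda>i. real (l ! (i-1)))"
    proof -
      have "Pf m (\<lambda>i. real (Npath d i H)) \<rho> = Pf m (\<lambda>i. real (l ! (i-1))) \<rho>" for \<rho>
        unfolding Pf_def l_def by (intro sum.cong refl) (auto simp: nth_upt simp del: upt_Suc)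
      then show ?thesis using H Rel_Pf[OF nm] by auto
    qed
    ultimately show "f \<in> (\<lambda>l. Pf m (\<lambda>i. real (l ! (i-1)))) ` ?L" by blast
  qed
  moreover have "finite ?L" by (rule finite_lists_length_eq) simp
  ultimately show ?thesis by (meson finite_imageI finite_subset)
qed

lemma lmr_char:
  assumes T: "is_T n m T" and G: "G \<in> T"
  shows "locally_most_reliable d T G \<longleftrightarrow> (\<forall>H\<in>T. lexge m (\<lambda>i. Npath d i G) (\<lambda>i. Npath d i H))"
proof
  assume L: "locally_most_reliable d T G"
  show "\<forall>H\<in>T. lexge m (\<lambda>i. Npath d i G) (\<lambda>i. Npath d i H)"
  proof (rule ccontr)
    assume "\<not> ?thesis"
    then obtain H where H: "H \<in> T" "\<not> lexge m (\<lambda>i. Npath d i G) (\<lambda>i. Npath d i H)" by blast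
    have nmG: "ttg_nm n m G" and nmH: "ttg_nm n m H" using T G H unfolding is_T_def by auto
    have e1: "eventually (\<lambda>\<rho>. Rel d G \<rho> < Rel d H \<rho>) (at_left 1)"
      using nlex_eventually[OF H(2)] unfolding Rel_Pf[OF nmG] Rel_Pf[OF nmH] .
    have e2: "eventually (\<lambda>\<rho>. \<forall>H\<in>T. Rel d G \<rho> \<ge> Rel d H \<rho>) (at_left 1)"
      using L lmr_eventually by blast
    have "eventually (\<lambda>\<rho>. False) (at_left (1::real))"
      using e1 e2 by eventually_elim (use H in force)
    then show False using trivial_limit_at_left_real by (simp add: eventually_False)
  qed
next
  assume lx: "\<forall>H\<in>T. lexge m (\<lambda>i. Npath d i G) (\<lambda>i. Npath d i H)"
  have nmG: "ttg_nm n m G" using T G unfolding is_T_def by auto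
  have "\<forall>f\<in>Rel d ` T. eventually (\<lambda>\<rho>. f \<rho> \<le> Rel d G \<rho>) (at_left 1)"
  proof
    fix f assume "f \<in> Rel d ` T"
    then obtain H where H: "H \<in> T" "f = Rel d H" by blast
    have nmH: "ttg_nm n m H" using T H unfolding is_T_def by auto
    show "eventually (\<lambda>\<rho>. f \<rho> \<le> Rel d G \<rho>) (at_left 1)"
      using lex_eventually[of m "\<lambda>i. Npath d i G" "\<lambda>i. Npath d i H"] lx H
      unfolding H(2) Rel_Pf[OF nmG] Rel_Pf[OF nmH] by blast
  qed
  then have "eventually (\<lambda>\<rho>. \<forall>f\<in>Rel d ` T. f \<rho> \<le> Rel d G \<rho>) (at_left 1)"
    by (rule eventually_ball_finite[OF Rel_finite[OF T]])
  then have "eventually (\<lambda>\<rho>. \<forall>H\<in>T. Rel d G \<rho> \<ge> Rel d H \<rho>) (at_left 1)"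
    by eventually_elim auto
  then show "locally_most_reliable d T G" using G lmr_eventually by blast
qed

theorem lemma1:
  fixes d n m :: nat and T :: "nat ttg set"
  assumes "d > 0"
    and "is_T n m T"
    and "T \<noteq> {}"
  shows "{G \<in> T. locally_most_reliable d T G} \<noteq> {}
       \<and> {G \<in> T. locally_most_reliable d T G} = Tseq d T m"
proof -
  have eq: "{G \<in> T. locally_most_reliable d T G} = Tseq d T m"
    unfolding Tseq_char using lmr_char[OF assms(2)] by blast
  show ?thesis using eq Tseq_ne[OF assms(2,3)] by simp
qed

end
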